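(* Let $\Omega\subset\mathbb{C}^d$ be an open convex set, $p\in\Omega$ and $x\in\partial\Omega$, and suppose $\delta_\Omega(p;x-p)\ge\epsilon\|x-p\|$ for some $\epsilon>0$. For $t\ge0$ put $x_t=x+e^{-2t}(p-x)$. Then $$|t_1-t_2|\le d_\Omega(x_{t_1},x_{t_2})\le 2\epsilon^{-1}|t_1-t_2|\quad\text{for all } t_1,t_2\ge0.$$ In particular the segment $[p,x)$ can be parametrized as a $(2\epsilon^{-1},0)$-quasi-geodesic in $(\Omega,d_\Omega)$.
   Context: $d_\Omega$ is the Kobayashi (pseudo-)distance. For $p\in\Omega$ and $v\neq0$, $\delta_\Omega(p;v)=\inf\{\|q-p\|: q\in(p+\mathbb{C}v)\setminus\Omega\}$. A curve $\sigma$ is an $(A,B)$-quasi-geodesic if $A^{-1}|t_1-t_2|-B\le d(\sigma(t_1),\sigma(t_2))\le A|t_1-t_2|+B$. *)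

theory Defs
  imports "HOL-Analysis.Analysis"
begin

text \<open>Poincare distance on the unit disc, normalised so that
  rho(0,r) = (1/2) ln((1+r)/(1-r)) = artanh r.\<close>
definition poincare_dist :: "complex \<Rightarrow> complex \<Rightarrow> real" where
  "poincare_dist a b = artanh (cmod (a - b) / cmod (1 - cnj a * b))"

definition holo_disc :: "(complex^'n) set \<Rightarrow> (complex \<Rightarrow> complex^'n) \<Rightarrow> bool" where
  "holo_disc \<Omega> f \<longleftrightarrow> (\<forall>i. (\<lambda>z. f z $ i) holomorphic_on ball 0 1) \<and> f ` ball 0 1 \<subseteq> \<Omega>"

definition lempert :: "(complex^'n) set \<Rightarrow> complex^'n \<Rightarrow> complex^'n \<Rightarrow> real" where
  "lempert \<Omega> z w = Inf {poincare_dist a b | a b f. holo_disc \<Omega> f \<and> a \<in> ball 0 1 \<and>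
       b \<in> ball 0 1 \<and> f a = z \<and> f b = w}"

definition kobayashi_dist :: "(complex^'n) set \<Rightarrow> complex^'n \<Rightarrow> complex^'n \<Rightarrow> real" where
  "kobayashi_dist \<Omega> z w = Inf {(\<Sum>i<n. lempert \<Omega> (c i) (c (Suc i))) | n c.
       c 0 = z \<and> c n = w \<and> (\<forall>i\<le>n. c i \<in> \<Omega>)}"

definition delta_dir :: "(complex^'n) set \<Rightarrow> complex^'n \<Rightarrow> complex^'n \<Rightarrow> real" where
  "delta_dir \<Omega> p v = Inf {norm (q - p) | q. q \<in> {p + c *s v | c. True} - \<Omega>}"

definition quasi_geodesic ::
  "('a \<Rightarrow> 'a \<Rightarrow> real) \<Rightarrow> real \<Rightarrow> real \<Rightarrow> real set \<Rightarrow> (real \<Rightarrow> 'a) \<Rightarrow> bool" where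
  "quasi_geodesic d A B I \<sigma> \<longleftrightarrow> (\<forall>t1\<in>I. \<forall>t2\<in>I.
      \<bar>t1 - t2\<bar> / A - B \<le> d (\<sigma> t1) (\<sigma> t2) \<and> d (\<sigma> t1) (\<sigma> t2) \<le> A * \<bar>t1 - t2\<bar> + B)"

end

theory Submission
  imports Defs "HOL-Complex_Analysis.Complex_Analysis"
begin

lemma artanh_mono_real:
  fixes x y :: real assumes "0 \<le> x" "x \<le> y" "y < 1"
  shows "artanh x \<le> artanh y"
proof -
  have "(1 + x) / (1 - x) \<le> (1 + y) / (1 - y)"
    using assms by (simp add: divide_simps) (simp add: algebra_simps)
  moreover have "0 < (1 + x) / (1 - x)" using assms by simp
  ultimately show ?thesis unfolding artanh_def by simp
qed

lemma artanh_nonneg_real: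
  fixes x :: real assumes "0 \<le> x" "x < 1" shows "0 \<le> artanh x"
  using artanh_mono_real[of 0 x] assms by simp

lemma artanh_le_bound:
  fixes y :: real assumes "0 \<le> y" "y < 1" shows "artanh y \<le> y / (1 - y)"
proof -
  have pos: "0 < (1 + y) / (1 - y)" using assms by simp
  have "ln ((1 + y) / (1 - y)) \<le> (1 + y) / (1 - y) - 1"
    using ln_le_minus_one[OF pos] .
  also have "\<dots> = 2 * (y / (1 - y))" using assms by (simp add: field_simps)
  finally have "ln ((1 + y) / (1 - y)) / 2 \<le> y / (1 - y)" by linarith
  thus ?thesis unfolding artanh_def .
qed

lemma artanh_ratio:
  fixes r1 r2 :: real assumes "0 < r2" "r2 \<le> r1"
  shows "artanh ((r1 - r2) / (r1 + r2)) = (ln r1 - ln r2) / 2"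
proof -
  have s: "r1 + r2 > 0" using assms by simp
  have a: "1 + (r1 - r2) / (r1 + r2) = 2 * r1 / (r1 + r2)" using s by (simp add: field_simps)
  have b: "1 - (r1 - r2) / (r1 + r2) = 2 * r2 / (r1 + r2)" using s by (simp add: field_simps)
  have "(1 + (r1 - r2) / (r1 + r2)) / (1 - (r1 - r2) / (r1 + r2)) = r1 / r2"
    unfolding a b using s assms by (simp add: divide_simps)
  thus ?thesis unfolding artanh_def using assms by (simp add: ln_div)
qed


lemma key_ineq:
  fixes S P al be :: real
  assumes "P \<ge> al" "P \<ge> be" "S \<ge> 2 * P" "P \<ge> 0"
  shows "(S - 2*P) * (S + 2*be) \<le> (S + 2*P) * (S - 2*al)"
proof -
  have d: "(S + 2*P) * (S - 2*al) - (S - 2*P) * (S + 2*be) = 2*S*(2*P - al - be) - 4*P*(al - be)"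
    by (simp add: algebra_simps)
  have h1: "2*P - al - be \<ge> \<bar>al - be\<bar>" using assms by linarith
  have h2: "2*S*(2*P - al - be) \<ge> 4*P*(2*P - al - be)"
    using assms mult_right_mono[of "4*P" "2*S" "2*P - al - be"] by linarith
  have h3: "4*P*(2*P - al - be) \<ge> 4*P*(al - be)"
    using mult_left_mono[of "al - be" "2*P - al - be" "4*P"] assms h1 by linarith
  show ?thesis using d h2 h3 by linarith
qed

lemma cmod_sq_sum: "(cmod (u + w))^2 = (cmod u)^2 + (cmod w)^2 + 2 * Re (u * cnj w)"
  by (simp only: cmod_power2) (simp add: power2_eq_square algebra_simps)

lemma lip_half_plane:
  fixes u1 u2 :: complex
  assumes "Re u1 > 0" "Re u2 > 0"
  shows "\<bar>ln (cmod u1) - ln (cmod u2)\<bar> / 2 \<le> artanh (cmod (u1 - u2) / cmod (u1 + cnj u2))"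
    and "cmod (u1 - u2) / cmod (u1 + cnj u2) < 1"
proof -
  have A: "(cmod (u1 + cnj u2))^2 = (cmod u1)^2 + (cmod u2)^2 + 2 * Re (u1 * u2)"
    using cmod_sq_sum[of u1 "cnj u2"] by simp
  have B: "(cmod (u1 - u2))^2 = (cmod u1)^2 + (cmod u2)^2 - 2 * Re (u1 * cnj u2)"
    using cmod_sq_sum[of u1 "- u2"] by simp
  have ReS: "Re (u1 * u2) + Re (u1 * cnj u2) = 2 * Re u1 * Re u2" by simp
  have pos: "Re u1 * Re u2 > 0" using assms by simp
  have Apos: "cmod (u1 + cnj u2) > 0"
  proof -
    have "Re (u1 + cnj u2) > 0" using assms by simp
    thus ?thesis using complex_Re_le_cmod[of "u1 + cnj u2"] by linarith
  qed
  have AB: "(cmod (u1 - u2))^2 < (cmod (u1 + cnj u2))^2" using A B ReS pos by linarith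
  have lt: "cmod (u1 - u2) < cmod (u1 + cnj u2)"
    using AB by (simp add: power2_less_imp_less Apos less_imp_le)
  thus lt1: "cmod (u1 - u2) / cmod (u1 + cnj u2) < 1" using Apos by simp
  have main: "(cmod u1 - cmod u2) / (cmod u1 + cmod u2) \<le> cmod (u1 - u2) / cmod (u1 + cnj u2)"
    if r: "cmod u2 \<le> cmod u1" "Re u1 > 0" "Re u2 > 0" for u1 u2 :: complex
  proof -
    let ?r1 = "cmod u1" and ?r2 = "cmod u2"
    define S where "S = ?r1^2 + ?r2^2"
    define P where "P = ?r1 * ?r2"
    define al where "al = Re (u1 * cnj u2)"
    define be where "be = Re (u1 * u2)"
    have A: "(cmod (u1 + cnj u2))^2 = S + 2*be"
      using cmod_sq_sum[of u1 "cnj u2"] by (simp add: S_def be_def)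
    have B: "(cmod (u1 - u2))^2 = S - 2*al"
      using cmod_sq_sum[of u1 "- u2"] by (simp add: S_def al_def)
    have Pal: "P \<ge> al" unfolding P_def al_def
      using complex_Re_le_cmod[of "u1 * cnj u2"] by (simp add: norm_mult)
    have Pbe: "P \<ge> be" unfolding P_def be_def
      using complex_Re_le_cmod[of "u1 * u2"] by (simp add: norm_mult)
    have SP: "S \<ge> 2*P" unfolding S_def P_def
      using sum_squares_bound[of "cmod u1" "cmod u2"] by (simp add: power2_eq_square)
    have P0: "P \<ge> 0" unfolding P_def by simp
    have r1p: "?r1 > 0" using r complex_Re_le_cmod[of u1] by linarith
    have r2p: "?r2 > 0" using r complex_Re_le_cmod[of u2] by linarith
    have Apos: "cmod (u1 + cnj u2) > 0"
    proof -
      have "Re (u1 + cnj u2) > 0" using r by simp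
      thus ?thesis using complex_Re_le_cmod[of "u1 + cnj u2"] by linarith
    qed
    have sq1: "(?r1 - ?r2)^2 = S - 2*P" unfolding S_def P_def by (simp add: power2_eq_square algebra_simps)
    have sq2: "(?r1 + ?r2)^2 = S + 2*P" unfolding S_def P_def by (simp add: power2_eq_square algebra_simps)
    have "(?r1 - ?r2)^2 * (cmod (u1 + cnj u2))^2 \<le> (?r1 + ?r2)^2 * (cmod (u1 - u2))^2"
      unfolding sq1 sq2 A B using key_ineq[OF Pal Pbe SP P0] .
    hence "((?r1 - ?r2) / (?r1 + ?r2))^2 \<le> (cmod (u1 - u2) / cmod (u1 + cnj u2))^2"
      using r1p r2p Apos by (simp add: power_divide divide_simps mult.commute)
    thus ?thesis
      by (rule power2_le_imp_le) simp
  qed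
  show "\<bar>ln (cmod u1) - ln (cmod u2)\<bar> / 2 \<le> artanh (cmod (u1 - u2) / cmod (u1 + cnj u2))"
  proof (cases "cmod u2 \<le> cmod u1")
    case True
    have r2p: "cmod u2 > 0" using assms complex_Re_le_cmod[of u2] by linarith
    have lnle: "ln (cmod u2) \<le> ln (cmod u1)" using True r2p ln_le_cancel_iff[of "cmod u2" "cmod u1"] by linarith
    have "\<bar>ln (cmod u1) - ln (cmod u2)\<bar> / 2 = (ln (cmod u1) - ln (cmod u2)) / 2" using lnle by simp
    also have "\<dots> = artanh ((cmod u1 - cmod u2) / (cmod u1 + cmod u2))"
      using artanh_ratio[OF r2p True] by simp
    also have "\<dots> \<le> artanh (cmod (u1 - u2) / cmod (u1 + cnj u2))"
      apply (rule artanh_mono_real)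
      using True r2p main[OF True assms] lt1 by simp_all
    finally show ?thesis .
  next
    case False
    hence F: "cmod u1 \<le> cmod u2" by simp
    have r1p: "cmod u1 > 0" using assms complex_Re_le_cmod[of u1] by linarith
    have e1: "cmod (u2 - u1) = cmod (u1 - u2)" by (simp add: norm_minus_commute)
    have e2: "cmod (u2 + cnj u1) = cmod (u1 + cnj u2)"
      by (metis add.commute complex_cnj_add complex_cnj_cnj complex_mod_cnj)
    have lnle: "ln (cmod u1) \<le> ln (cmod u2)" using F r1p ln_le_cancel_iff[of "cmod u1" "cmod u2"] by linarith
    have "\<bar>ln (cmod u1) - ln (cmod u2)\<bar> / 2 = (ln (cmod u2) - ln (cmod u1)) / 2" using lnle by simp
    also have "\<dots> = artanh ((cmod u2 - cmod u1) / (cmod u2 + cmod u1))"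
      using artanh_ratio[OF r1p F] by simp
    also have "\<dots> \<le> artanh (cmod (u1 - u2) / cmod (u1 + cnj u2))"
      apply (rule artanh_mono_real)
      using F r1p main[OF F assms(2,1)] lt1 e1 e2 by simp_all
    finally show ?thesis .
  qed
qed


lemma schwarz_pick:
  assumes holh: "h holomorphic_on ball 0 1" and hD: "\<And>z. z \<in> ball 0 1 \<Longrightarrow> h z \<in> ball 0 1"
    and a: "a \<in> ball 0 1" and b: "b \<in> ball 0 1"
  shows "cmod (h a - h b) / cmod (1 - cnj (h a) * h b) \<le> cmod (a - b) / cmod (1 - cnj a * b)"
proof -
  define k where "k = Moebius_function 0 (h a) \<circ> h \<circ> Moebius_function 0 (-a)"
  have na: "norm (-a) < 1" "norm a < 1" using a by auto
  have nha: "norm (h a) < 1" using hD[OF a] by auto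
  have M1: "Moebius_function 0 (-a) ` ball 0 1 \<subseteq> ball 0 1"
    using Moebius_function_norm_lt_1[OF na(1)] by auto
  have h1: "(h \<circ> Moebius_function 0 (- a)) holomorphic_on ball 0 1"
    by (rule holomorphic_on_compose_gen[OF Moebius_function_holomorphic[OF na(1)] holh M1])
  have h2: "(Moebius_function 0 (h a) \<circ> (h \<circ> Moebius_function 0 (- a))) holomorphic_on ball 0 1"
    by (rule holomorphic_on_compose_gen[OF h1 Moebius_function_holomorphic[OF nha]]) (use M1 hD in auto)
  have holk: "k holomorphic_on ball 0 1"
    using h2 unfolding k_def by (simp add: o_assoc)
  have k0: "k 0 = 0"
    unfolding k_def by (simp add: Moebius_function_simple Moebius_function_eq_zero)
  have kno: "norm (k z) < 1" if "norm z < 1" for z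
  proof -
    have "Moebius_function 0 (-a) z \<in> ball 0 1" using Moebius_function_norm_lt_1[OF na(1) that] by auto
    hence "norm (h (Moebius_function 0 (-a) z)) < 1" using hD by auto
    thus ?thesis unfolding k_def using Moebius_function_norm_lt_1[OF nha] by simp
  qed
  define \<xi> where "\<xi> = Moebius_function 0 a b"
  have nxi: "norm \<xi> < 1" unfolding \<xi>_def using Moebius_function_norm_lt_1 na(2) b by auto
  have "norm (k \<xi>) \<le> norm \<xi>"
    using Schwarz_Lemma(1)[OF holk k0 kno nxi] .
  moreover have "k \<xi> = Moebius_function 0 (h a) (h b)"
    unfolding k_def \<xi>_def using Moebius_function_compose[of "-a" a b] na b by simp
  ultimately have "norm (Moebius_function 0 (h a) (h b)) \<le> norm (Moebius_function 0 a b)"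
    unfolding \<xi>_def by simp
  thus ?thesis
    by (simp add: Moebius_function_simple norm_divide norm_minus_commute)
qed

lemma moeb_aux: fixes c g :: complex assumes "c + 1 \<noteq> 0" "g + 1 \<noteq> 0"
  shows "1 - (c - 1)/(c + 1) * ((g - 1)/(g + 1)) = 2 * (c + g) / ((c + 1) * (g + 1))"
proof -
  have e: "(c + 1) * (g + 1) \<noteq> 0" using assms by simp
  have m: "(c - 1)/(c + 1) * ((g - 1)/(g + 1)) = ((c - 1) * (g - 1)) / ((c + 1) * (g + 1))"
    by (rule times_divide_times_eq)
  have "1 - (c - 1)/(c + 1) * ((g - 1)/(g + 1)) = ((c + 1) * (g + 1) - (c - 1) * (g - 1)) / ((c + 1) * (g + 1))"
    unfolding m using e by (metis diff_divide_distrib divide_self)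
  also have "(c + 1) * (g + 1) - (c - 1) * (g - 1) = 2 * (c + g)" by (simp add: algebra_simps)
  finally show ?thesis .
qed

lemma cayley_identity:
  fixes g1 g2 :: complex
  assumes "Re g1 > 0" "Re g2 > 0"
  shows "cmod ((g1 - 1)/(g1 + 1) - (g2 - 1)/(g2 + 1)) / cmod (1 - cnj ((g1 - 1)/(g1 + 1)) * ((g2 - 1)/(g2 + 1)))
       = cmod (g1 - g2) / cmod (g1 + cnj g2)"
proof -
  have n1: "g1 + 1 \<noteq> 0" using assms by (metis add_pos_pos plus_complex.sel(1) one_complex.sel(1) zero_complex.sel(1) zero_less_one less_irrefl)
  have n2: "g2 + 1 \<noteq> 0" using assms by (metis add_pos_pos plus_complex.sel(1) one_complex.sel(1) zero_complex.sel(1) zero_less_one less_irrefl)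
  have n1c: "cnj g1 + 1 \<noteq> 0" using n1 by (metis complex_cnj_add complex_cnj_one complex_cnj_zero_iff)
  have e1: "(g1 - 1)/(g1 + 1) - (g2 - 1)/(g2 + 1) = 2 * (g1 - g2) / ((g1 + 1) * (g2 + 1))"
    using n1 n2 by (simp add: field_simps; simp add: algebra_simps)
  have e2: "1 - cnj ((g1 - 1)/(g1 + 1)) * ((g2 - 1)/(g2 + 1)) = 2 * (cnj g1 + g2) / ((cnj g1 + 1) * (g2 + 1))"
    using moeb_aux[OF n1c n2] by simp
  have c1: "cmod (cnj g1 + 1) = cmod (g1 + 1)"
    by (metis complex_cnj_add complex_cnj_one complex_mod_cnj)
  have c2: "cmod (cnj g1 + g2) = cmod (g1 + cnj g2)"
    by (metis complex_cnj_add complex_cnj_cnj complex_mod_cnj)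
  have p: "cmod (g1 + 1) > 0" "cmod (g2 + 1) > 0" using n1 n2 by auto
  have N1: "cmod (2 * (g1 - g2) / ((g1 + 1) * (g2 + 1))) = 2 * cmod (g1 - g2) / (cmod (g1 + 1) * cmod (g2 + 1))"
    unfolding norm_divide norm_mult by simp
  have N2: "cmod (2 * (cnj g1 + g2) / ((cnj g1 + 1) * (g2 + 1))) = 2 * cmod (g1 + cnj g2) / (cmod (g1 + 1) * cmod (g2 + 1))"
    unfolding norm_divide norm_mult using c1 c2 by simp
  have D: "cmod (g1 + 1) * cmod (g2 + 1) \<noteq> 0" using p by simp
  have gen: "\<And>x y D::real. D \<noteq> 0 \<Longrightarrow> (2 * x / D) / (2 * y / D) = x / y"
    by (simp add: divide_simps)
  show ?thesis unfolding e1 e2 N1 N2 using gen[OF D] .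
qed

lemma cayley_in_disc:
  fixes g :: complex assumes "Re g > 0"
  shows "cmod ((g - 1)/(g + 1)) < 1"
proof -
  have "(cmod (g - 1))^2 < (cmod (g + 1))^2"
    using assms by (simp only: cmod_power2) (simp add: power2_eq_square algebra_simps)
  hence "cmod (g - 1) < cmod (g + 1)" by (simp add: power2_less_imp_less)
  thus ?thesis by (simp add: norm_divide divide_less_eq)
qed


lemma poincare_ratio_lt1:
  assumes "a \<in> ball 0 1" "b \<in> ball 0 1"
  shows "cmod (a - b) / cmod (1 - cnj a * b) < 1"
proof -
  have "norm (Moebius_function 0 a b) < 1"
    using Moebius_function_norm_lt_1 assms by auto
  thus ?thesis by (simp add: Moebius_function_simple norm_divide norm_minus_commute)
qed

lemma poincare_nonneg:
  assumes "a \<in> ball 0 1" "b \<in> ball 0 1"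
  shows "0 \<le> poincare_dist a b"
  unfolding poincare_dist_def
  by (rule artanh_nonneg_real) (simp_all add: poincare_ratio_lt1[OF assms])

lemma disc_exists:
  fixes \<Omega> :: "(complex^'n) set"
  assumes op: "open \<Omega>" and cv: "convex \<Omega>" and z: "z \<in> \<Omega>" and w: "w \<in> \<Omega>"
  shows "\<exists>f a b. holo_disc \<Omega> f \<and> a \<in> ball 0 1 \<and> b \<in> ball 0 1 \<and> f a = z \<and> f b = w"
proof -
  define g where "g = (\<lambda>\<zeta>::complex. (\<chi> i. z$i + \<zeta> * (w$i - z$i)) :: complex^'n)"
  define L where "L = g -` \<Omega>"
  have g0: "g 0 = z" unfolding g_def by (simp add: vec_eq_iff)
  have g1: "g 1 = w" unfolding g_def by (simp add: vec_eq_iff)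
  have contg: "continuous_on UNIV g"
    unfolding g_def by (intro continuous_on_vec_lambda continuous_intros)
  have openL: "open L" unfolding L_def
    using open_vimage[OF op contg] .
  have convL: "convex L"
    unfolding convex_alt L_def
  proof (intro ballI allI impI)
    fix x y :: complex and u :: real
    assume x: "x \<in> g -` \<Omega>" and y: "y \<in> g -` \<Omega>" and u: "0 \<le> u \<and> u \<le> 1"
    have "g ((1 - u) *\<^sub>R x + u *\<^sub>R y) = (1 - u) *\<^sub>R g x + u *\<^sub>R g y"
      unfolding vec_eq_iff
    proof
      fix i
      show "g ((1 - u) *\<^sub>R x + u *\<^sub>R y) $ i = ((1 - u) *\<^sub>R g x + u *\<^sub>R g y) $ i"
        by (simp add: g_def) (simp add: scaleR_conv_of_real algebra_simps)
    qed
    moreover have "(1 - u) *\<^sub>R g x + u *\<^sub>R g y \<in> \<Omega>"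
      using cv[unfolded convex_alt] x y u by auto
    ultimately show "(1 - u) *\<^sub>R x + u *\<^sub>R y \<in> g -` \<Omega>" by simp
  qed
  have L0: "0 \<in> L" "1 \<in> L" unfolding L_def using g0 g1 z w by auto
  have hol_comp: "(\<lambda>\<zeta>. g (G \<zeta>) $ i) holomorphic_on ball 0 1" if "G holomorphic_on ball 0 1" for G i
    unfolding g_def using that by (simp add: holomorphic_intros)
  show ?thesis
  proof (cases "L = UNIV")
    case True
    define f where "f = (\<lambda>\<zeta>. g (2 * \<zeta>))"
    have "holo_disc \<Omega> f"
      unfolding holo_disc_def f_def
    proof
      show "\<forall>i. (\<lambda>z. g (2 * z) $ i) holomorphic_on ball 0 1"
        using hol_comp[of "\<lambda>\<zeta>. 2 * \<zeta>"] by (simp add: holomorphic_intros)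
      show "(\<lambda>\<zeta>. g (2 * \<zeta>)) ` ball 0 1 \<subseteq> \<Omega>"
        using True unfolding L_def by auto
    qed
    moreover have "f 0 = z" "f (1/2) = w" unfolding f_def using g0 g1 by simp_all
    ultimately show ?thesis
      by (intro exI[of _ f] exI[of _ 0] exI[of _ "1/2"]) simp
  next
    case False
    have "open L \<and> simply_connected L"
      using openL convex_imp_simply_connected[OF convL] by simp
    then obtain F G where G: "G holomorphic_on ball 0 1"
      and FL: "\<forall>z \<in> L. F z \<in> ball 0 1 \<and> G (F z) = z"
      and GD: "\<forall>z \<in> ball 0 1. G z \<in> L \<and> F (G z) = z"
      unfolding Riemann_mapping_theorem using False L0 by blast
    define f where "f = (\<lambda>\<zeta>. g (G \<zeta>))"
    have "holo_disc \<Omega> f"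
      unfolding holo_disc_def f_def
    proof
      show "\<forall>i. (\<lambda>z. g (G z) $ i) holomorphic_on ball 0 1"
        using hol_comp[OF G] by simp
      show "(\<lambda>\<zeta>. g (G \<zeta>)) ` ball 0 1 \<subseteq> \<Omega>"
        using GD unfolding L_def by auto
    qed
    moreover have "f (F 0) = z" "f (F 1) = w" unfolding f_def using g0 g1 FL L0 by simp_all
    ultimately show ?thesis
      using FL L0 by (intro exI[of _ f] exI[of _ "F 0"] exI[of _ "F 1"]) simp
  qed
qed

lemma lempert_set_ne:
  fixes \<Omega> :: "(complex^'n) set"
  assumes "open \<Omega>" "convex \<Omega>" "z \<in> \<Omega>" "w \<in> \<Omega>"
  shows "{poincare_dist a b | a b f. holo_disc \<Omega> f \<and> a \<in> ball 0 1 \<and>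
       b \<in> ball 0 1 \<and> f a = z \<and> f b = w} \<noteq> {}"
  using disc_exists[OF assms] by blast

lemma lempert_nonneg:
  fixes \<Omega> :: "(complex^'n) set"
  assumes "open \<Omega>" "convex \<Omega>" "z \<in> \<Omega>" "w \<in> \<Omega>"
  shows "0 \<le> lempert \<Omega> z w"
  unfolding lempert_def
  by (rule cInf_greatest[OF lempert_set_ne[OF assms]]) (auto intro: poincare_nonneg)

lemma lempert_le:
  fixes \<Omega> :: "(complex^'n) set"
  assumes "holo_disc \<Omega> f" "a \<in> ball 0 1" "b \<in> ball 0 1"
  shows "lempert \<Omega> (f a) (f b) \<le> poincare_dist a b"
  unfolding lempert_def
proof (rule cInf_lower)
  show "poincare_dist a b \<in> {poincare_dist a' b' | a' b' f'. holo_disc \<Omega> f' \<and> a' \<in> ball 0 1 \<and>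
       b' \<in> ball 0 1 \<and> f' a' = f a \<and> f' b' = f b}" using assms by blast
  show "bdd_below {poincare_dist a' b' | a' b' f'. holo_disc \<Omega> f' \<and> a' \<in> ball 0 1 \<and>
       b' \<in> ball 0 1 \<and> f' a' = f a \<and> f' b' = f b}"
    by (rule bdd_belowI[of _ 0]) (auto intro: poincare_nonneg)
qed

lemma lempert_ge:
  fixes \<Omega> :: "(complex^'n) set"
  assumes "open \<Omega>" "convex \<Omega>" "z \<in> \<Omega>" "w \<in> \<Omega>"
    and "\<And>f a b. holo_disc \<Omega> f \<Longrightarrow> a \<in> ball 0 1 \<Longrightarrow> b \<in> ball 0 1 \<Longrightarrow> f a = z \<Longrightarrow> f b = w
         \<Longrightarrow> K \<le> poincare_dist a b"
  shows "K \<le> lempert \<Omega> z w"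
  unfolding lempert_def
  by (rule cInf_greatest[OF lempert_set_ne[OF assms(1-4)]]) (use assms(5) in blast)

lemma kob_le:
  fixes \<Omega> :: "(complex^'n) set"
  assumes "open \<Omega>" "convex \<Omega>" "c 0 = z" "c n = w" "\<forall>i\<le>n. c i \<in> \<Omega>"
  shows "kobayashi_dist \<Omega> z w \<le> (\<Sum>i<n. lempert \<Omega> (c i) (c (Suc i)))"
  unfolding kobayashi_dist_def
proof (rule cInf_lower)
  show "(\<Sum>i<n. lempert \<Omega> (c i) (c (Suc i))) \<in> {(\<Sum>i<n. lempert \<Omega> (c i) (c (Suc i))) | n c.
       c 0 = z \<and> c n = w \<and> (\<forall>i\<le>n. c i \<in> \<Omega>)}" using assms by blast
  show "bdd_below {(\<Sum>i<n. lempert \<Omega> (c i) (c (Suc i))) | n c.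
       c 0 = z \<and> c n = w \<and> (\<forall>i\<le>n. c i \<in> \<Omega>)}"
  proof (rule bdd_belowI[of _ 0], clarify)
    fix m and d :: "nat \<Rightarrow> complex^'n"
    assume d: "\<forall>i\<le>m. d i \<in> \<Omega>"
    show "0 \<le> (\<Sum>i<m. lempert \<Omega> (d i) (d (Suc i)))"
      by (rule sum_nonneg) (use d in \<open>auto intro!: lempert_nonneg[OF assms(1,2)]\<close>)
  qed
qed

lemma kob_ge:
  fixes \<Omega> :: "(complex^'n) set"
  assumes "z \<in> \<Omega>" "w \<in> \<Omega>"
    and "\<And>n c. c 0 = z \<Longrightarrow> c n = w \<Longrightarrow> \<forall>i\<le>n. c i \<in> \<Omega> \<Longrightarrow> K \<le> (\<Sum>i<n. lempert \<Omega> (c i) (c (Suc i)))"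
  shows "K \<le> kobayashi_dist \<Omega> z w"
  unfolding kobayashi_dist_def
proof (rule cInf_greatest)
  define c1 where "c1 = (\<lambda>i::nat. if i = 0 then z else w)"
  have "c1 0 = z \<and> c1 1 = w \<and> (\<forall>i\<le>1. c1 i \<in> \<Omega>)" using assms unfolding c1_def by auto
  thus "{(\<Sum>i<n. lempert \<Omega> (c i) (c (Suc i))) | n c.
       c 0 = z \<and> c n = w \<and> (\<forall>i\<le>n. c i \<in> \<Omega>)} \<noteq> {}" by blast
qed (use assms(3) in blast)


definition ufun :: "complex^'n \<Rightarrow> complex^'n \<Rightarrow> complex^'n \<Rightarrow> complex" where
  "ufun a x y = (\<Sum>i\<in>UNIV. cnj (a$i) * (y$i - x$i))"

lemma Re_ufun: "Re (ufun a x y) = inner a (y - x)"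
  by (simp add: ufun_def inner_vec_def inner_complex_def)

lemma separation:
  fixes \<Omega> :: "(complex^'n) set"
  assumes op: "open \<Omega>" and cv: "convex \<Omega>" and x: "x \<notin> \<Omega>"
  shows "\<exists>a. \<forall>y\<in>\<Omega>. 0 < Re (ufun a x y)"
proof -
  have "convex ((\<lambda>y. y - x) ` \<Omega>)" using cv by (simp add: convex_translation_subtract)
  moreover have "0 \<notin> (\<lambda>y. y - x) ` \<Omega>" using x by auto
  ultimately obtain a where a: "a \<noteq> 0" "\<forall>s\<in>(\<lambda>y. y - x) ` \<Omega>. 0 \<le> inner a s"
    using separating_hyperplane_set_0 by blast
  have "0 < Re (ufun a x y)" if y: "y \<in> \<Omega>" for y
  proof -
    obtain e where e: "e > 0" "ball y e \<subseteq> \<Omega>" using op y open_contains_ball by blast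
    define y' where "y' = y - (e / 2 / norm a) *\<^sub>R a"
    have na: "norm a > 0" using a by simp
    have "dist y y' = e / 2" unfolding y'_def dist_norm using na e by simp
    hence "y' \<in> \<Omega>" using e by auto
    hence "0 \<le> inner a (y' - x)" using a by auto
    also have "inner a (y' - x) = inner a (y - x) - (e / 2 / norm a) * inner a a"
      unfolding y'_def by (simp add: inner_diff_right algebra_simps)
    also have "inner a a = norm a * norm a" by (simp add: power2_norm_eq_inner[symmetric] power2_eq_square)
    finally have "(e / 2) * norm a \<le> inner a (y - x)" using na by (simp add: field_simps)
    moreover have "(e / 2) * norm a > 0" using na e by simp
    ultimately show ?thesis unfolding Re_ufun by linarith
  qed
  thus ?thesis by blast
qed

lemma disc_lip:
  fixes \<Omega> :: "(complex^'n) set"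
  assumes hf: "holo_disc \<Omega> f" and a0: "a0 \<in> ball 0 1" and b0: "b0 \<in> ball 0 1"
    and pos: "\<forall>y\<in>\<Omega>. 0 < Re (ufun a x y)"
  shows "\<bar>ln (cmod (ufun a x (f a0))) - ln (cmod (ufun a x (f b0)))\<bar> / 2 \<le> poincare_dist a0 b0"
proof -
  define g where "g = (\<lambda>\<zeta>. ufun a x (f \<zeta>))"
  have fD: "f \<zeta> \<in> \<Omega>" if "\<zeta> \<in> ball 0 1" for \<zeta> using hf that unfolding holo_disc_def by auto
  have gpos: "0 < Re (g \<zeta>)" if "\<zeta> \<in> ball 0 1" for \<zeta> using pos fD[OF that] unfolding g_def by auto
  have holg: "g holomorphic_on ball 0 1"
    unfolding g_def ufun_def using hf unfolding holo_disc_def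
    by (intro holomorphic_intros holomorphic_on_sum) auto
  define h where "h = (\<lambda>\<zeta>. (g \<zeta> - 1) / (g \<zeta> + 1))"
  have nz: "g \<zeta> + 1 \<noteq> 0" if "\<zeta> \<in> ball 0 1" for \<zeta>
  proof
    assume "g \<zeta> + 1 = 0"
    hence "Re (g \<zeta>) = -1" by (metis add.commute add_eq_0_iff minus_complex.simps(1) one_complex.sel(1) uminus_complex.sel(1) zero_complex.sel(1) eq_neg_iff_add_eq_0)
    thus False using gpos[OF that] by simp
  qed
  have holh: "h holomorphic_on ball 0 1"
    unfolding h_def using holg nz by (intro holomorphic_intros) auto
  have hD: "h \<zeta> \<in> ball 0 1" if "\<zeta> \<in> ball 0 1" for \<zeta>
    using cayley_in_disc[OF gpos[OF that]] unfolding h_def by simp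
  have sp: "cmod (h a0 - h b0) / cmod (1 - cnj (h a0) * h b0) \<le> cmod (a0 - b0) / cmod (1 - cnj a0 * b0)"
    using schwarz_pick[OF holh hD a0 b0] by simp
  have ci: "cmod (h a0 - h b0) / cmod (1 - cnj (h a0) * h b0) = cmod (g a0 - g b0) / cmod (g a0 + cnj (g b0))"
    unfolding h_def using cayley_identity[OF gpos[OF a0] gpos[OF b0]] .
  have "\<bar>ln (cmod (g a0)) - ln (cmod (g b0))\<bar> / 2 \<le> artanh (cmod (g a0 - g b0) / cmod (g a0 + cnj (g b0)))"
    using lip_half_plane(1)[OF gpos[OF a0] gpos[OF b0]] .
  also have "\<dots> \<le> artanh (cmod (a0 - b0) / cmod (1 - cnj a0 * b0))"
    apply (rule artanh_mono_real)
    using sp ci poincare_ratio_lt1[OF a0 b0] by simp_all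
  finally show ?thesis unfolding g_def poincare_dist_def .
qed

lemma kob_lip:
  fixes \<Omega> :: "(complex^'n) set"
  assumes op: "open \<Omega>" and cv: "convex \<Omega>" and z: "z \<in> \<Omega>" and w: "w \<in> \<Omega>"
    and pos: "\<forall>y\<in>\<Omega>. 0 < Re (ufun a x y)"
  shows "\<bar>ln (cmod (ufun a x z)) - ln (cmod (ufun a x w))\<bar> / 2 \<le> kobayashi_dist \<Omega> z w"
proof (rule kob_ge[OF z w])
  define F where "F = (\<lambda>y. ln (cmod (ufun a x y)) / 2)"
  have lem: "\<bar>F u - F v\<bar> \<le> lempert \<Omega> u v" if "u \<in> \<Omega>" "v \<in> \<Omega>" for u v
  proof (rule lempert_ge[OF op cv that])
    fix f a0 b0 assume "holo_disc \<Omega> f" "a0 \<in> ball 0 1" "b0 \<in> ball 0 1" "f a0 = u" "f b0 = v"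
    thus "\<bar>F u - F v\<bar> \<le> poincare_dist a0 b0"
      using disc_lip[OF _ _ _ pos, of f a0 b0] unfolding F_def by (simp add: field_simps abs_divide)
  qed
  fix n :: nat and c :: "nat \<Rightarrow> complex^'n"
  assume c: "c 0 = z" "c n = w" "\<forall>i\<le>n. c i \<in> \<Omega>"
  have "\<forall>m\<le>n. \<bar>F (c 0) - F (c m)\<bar> \<le> (\<Sum>i<m. lempert \<Omega> (c i) (c (Suc i)))"
  proof (intro allI impI)
    fix m assume "m \<le> n"
    thus "\<bar>F (c 0) - F (c m)\<bar> \<le> (\<Sum>i<m. lempert \<Omega> (c i) (c (Suc i)))"
    proof (induction m)
      case 0 thus ?case by simp
    next
      case (Suc m)
      have "\<bar>F (c m) - F (c (Suc m))\<bar> \<le> lempert \<Omega> (c m) (c (Suc m))"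
        using lem c(3) Suc.prems by simp
      thus ?case using Suc by simp
    qed
  qed
  hence "\<bar>F z - F w\<bar> \<le> (\<Sum>i<n. lempert \<Omega> (c i) (c (Suc i)))" using c by auto
  thus "\<bar>ln (cmod (ufun a x z)) - ln (cmod (ufun a x w))\<bar> / 2 \<le> (\<Sum>i<n. lempert \<Omega> (c i) (c (Suc i)))"
    unfolding F_def by (simp add: field_simps abs_divide)
qed


lemma norm_smult_vec: "norm (c *s (v::complex^'n)) = cmod c * norm v"
proof -
  have "norm (c *s v) = L2_set (\<lambda>i. cmod c * norm (v$i)) UNIV"
    unfolding norm_vec_def by (simp add: norm_mult)
  also have "\<dots> = cmod c * L2_set (\<lambda>i. norm (v$i)) UNIV"
    by (rule L2_set_right_distrib[symmetric]) simp
  finally show ?thesis unfolding norm_vec_def .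
qed

lemma delta_le:
  fixes \<Omega> :: "(complex^'n) set"
  assumes "p + c *s v \<notin> \<Omega>"
  shows "delta_dir \<Omega> p v \<le> norm (c *s v)"
  unfolding delta_dir_def
proof (rule cInf_lower)
  show "norm (c *s v) \<in> {norm (q - p) | q. q \<in> {p + c *s v | c. True} - \<Omega>}"
    using assms by force
  show "bdd_below {norm (q - p) | q. q \<in> {p + c *s v | c. True} - \<Omega>}"
    by (rule bdd_belowI[of _ 0]) auto
qed

lemma in_dir_ball:
  fixes \<Omega> :: "(complex^'n) set"
  assumes "norm (c *s v) < delta_dir \<Omega> p v"
  shows "p + c *s v \<in> \<Omega>"
  using delta_le[of p c v \<Omega>] assms by force

lemma disc_in:
  fixes \<Omega> :: "(complex^'n) set"
  assumes op: "open \<Omega>" and cv: "convex \<Omega>" and x: "x \<in> frontier \<Omega>" and ep: "\<epsilon> > 0"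
    and del: "delta_dir \<Omega> p (x - p) \<ge> \<epsilon> * norm (x - p)"
    and s: "s \<ge> 0" and \<zeta>: "\<zeta> \<in> ball 0 1" and pO: "p \<in> \<Omega>"
  shows "x + exp (-2 * s) *\<^sub>R (p - x) + (of_real (\<epsilon> * exp (-2 * s)) * \<zeta>) *s (x - p) \<in> \<Omega>"
proof -
  define q where "q = p + (of_real \<epsilon> * \<zeta>) *s (x - p)"
  have eqn: "norm ((of_real \<epsilon> * \<zeta>) *s (x - p)) = \<epsilon> * cmod \<zeta> * norm (x - p)"
    unfolding norm_smult_vec norm_mult using ep by simp
  have "norm ((of_real \<epsilon> * \<zeta>) *s (x - p)) = \<epsilon> * cmod \<zeta> * norm (x - p)" by (rule eqn)
  also have "\<dots> \<le> \<epsilon> * norm (x - p)"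
    using \<zeta> ep by (simp add: mult_right_le_one_le mult_left_le_one_le)
  finally have le1: "norm ((of_real \<epsilon> * \<zeta>) *s (x - p)) \<le> \<epsilon> * norm (x - p)" .
  have qO: "q \<in> \<Omega>"
  proof (cases "x = p")
    case True
    have "(of_real \<epsilon> * \<zeta>) *s (x - p) = 0" using True by (simp add: vec_eq_iff)
    thus ?thesis unfolding q_def using pO by (simp only: add_0_right)
  next
    case False
    have "cmod \<zeta> < 1" using \<zeta> by simp
    hence lt: "\<epsilon> * cmod \<zeta> * norm (x - p) < \<epsilon> * norm (x - p)" using ep False by simp
    have "norm ((of_real \<epsilon> * \<zeta>) *s (x - p)) < delta_dir \<Omega> p (x - p)"
      unfolding eqn using lt del by linarith
    thus ?thesis unfolding q_def by (rule in_dir_ball)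
  qed
  have xcl: "x \<in> closure \<Omega>" using x by (simp add: frontier_def)
  have ii: "x - exp (-2 * s) *\<^sub>R (x - q) \<in> interior \<Omega>"
    by (rule mem_interior_closure_convex_shrink[OF cv _ xcl]) (use qO op s in \<open>auto simp: interior_open\<close>)
  have ee: "x - exp (-2 * s) *\<^sub>R (x - q) = x + exp (-2 * s) *\<^sub>R (p - x) + (of_real (\<epsilon> * exp (-2 * s)) * \<zeta>) *s (x - p)"
  proof -
    have "\<And>i. (x - exp (-2 * s) *\<^sub>R (x - q)) $ i = (x + exp (-2 * s) *\<^sub>R (p - x) + (of_real (\<epsilon> * exp (-2 * s)) * \<zeta>) *s (x - p)) $ i"
      by (simp add: q_def) (simp add: scaleR_conv_of_real algebra_simps)
    thus ?thesis by (simp add: vec_eq_iff)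
  qed
  show ?thesis using ii unfolding ee interior_open[OF op] .
qed


lemma exp_diff_bound:
  fixes s t :: real
  shows "\<bar>1 - exp (2 * (s - t))\<bar> \<le> exp (2 * \<bar>t - s\<bar>) - 1"
proof (cases "s \<ge> t")
  case True
  have "exp (2 * (s - t)) \<ge> 1" using True by simp
  thus ?thesis using True by simp
next
  case False
  define y where "y = 2 * (t - s)"
  have y: "y > 0" using False unfolding y_def by simp
  have e1: "exp (2 * (s - t)) = exp (- y)" unfolding y_def by simp
  have e2: "exp (2 * \<bar>t - s\<bar>) = exp y" unfolding y_def using False by simp
  have h1: "1 - y \<le> exp (-y)" using exp_ge_add_one_self[of "-y"] by simp
  have h2: "1 + y \<le> exp y" using exp_ge_add_one_self[of y] by simp
  have "exp (-y) \<le> 1" using y by simp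
  hence h3: "\<bar>1 - exp (-y)\<bar> = 1 - exp (-y)" by simp
  show ?thesis unfolding e1 e2 h3 using h1 h2 by linarith
qed

lemma exp_minus_one_bound:
  fixes y :: real assumes "y \<ge> 0"
  shows "exp y - 1 \<le> y * exp y"
proof -
  have "1 - y \<le> exp (-y)" using exp_ge_add_one_self[of "-y"] by simp
  hence "(1 - y) * exp y \<le> exp (-y) * exp y" by (simp add: mult_right_mono)
  also have "exp (-y) * exp y = 1" by (simp add: exp_add[symmetric])
  finally show ?thesis by (simp add: algebra_simps)
qed

lemma frac_mono_lt1:
  fixes a b :: real assumes "0 \<le> a" "a \<le> b" "b < 1"
  shows "a / (1 - a) \<le> b / (1 - b)"
  using assms by (simp add: divide_simps) (simp add: algebra_simps)

lemma step_bound: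
  fixes \<Omega> :: "(complex^'n) set"
  assumes op: "open \<Omega>" and cv: "convex \<Omega>" and x: "x \<in> frontier \<Omega>" and ep: "\<epsilon> > 0"
    and del: "delta_dir \<Omega> p (x - p) \<ge> \<epsilon> * norm (x - p)" and pO: "p \<in> \<Omega>"
    and s: "s \<ge> 0" and t: "t \<ge> 0"
    and B: "(exp (2 * \<bar>t - s\<bar>) - 1) / \<epsilon> \<le> B" "B < 1"
  shows "lempert \<Omega> (x + exp (-2 * s) *\<^sub>R (p - x)) (x + exp (-2 * t) *\<^sub>R (p - x)) \<le> B / (1 - B)"
proof -
  define f where "f = (\<lambda>\<zeta>. x + exp (-2 * s) *\<^sub>R (p - x) + (of_real (\<epsilon> * exp (-2 * s)) * \<zeta>) *s (x - p))"
  have hf: "holo_disc \<Omega> f"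
    unfolding holo_disc_def
  proof
    show "\<forall>i. (\<lambda>z. f z $ i) holomorphic_on ball 0 1"
      unfolding f_def by (simp add: holomorphic_intros)
    show "f ` ball 0 1 \<subseteq> \<Omega>"
      unfolding f_def using disc_in[OF op cv x ep del s _ pO] by auto
  qed
  define r where "r = (1 - exp (2 * (s - t))) / \<epsilon>"
  have "\<bar>r\<bar> = \<bar>1 - exp (2 * (s - t))\<bar> / \<epsilon>" unfolding r_def using ep by (simp add: abs_divide)
  also have "\<dots> \<le> (exp (2 * \<bar>t - s\<bar>) - 1) / \<epsilon>"
    by (rule divide_right_mono[OF exp_diff_bound]) (use ep in simp)
  finally have rb: "\<bar>r\<bar> \<le> B" using B(1) by linarith
  have r1: "\<bar>r\<bar> < 1" using rb B by simp
  have D0: "(0::complex) \<in> ball 0 1" by simp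
  have Dr: "complex_of_real r \<in> ball 0 1" using r1 by simp
  have f0: "f 0 = x + exp (-2 * s) *\<^sub>R (p - x)" unfolding f_def by (simp add: vec_eq_iff)
  have sc: "exp (-2 * s) - \<epsilon> * exp (-2 * s) * r = exp (-2 * t)"
  proof -
    have "exp (-2 * s) - \<epsilon> * exp (-2 * s) * r = exp (-2 * s) * exp (2 * (s - t))"
      unfolding r_def using ep by (simp add: field_simps)
    also have "\<dots> = exp (-2 * t)" by (simp add: exp_add[symmetric] algebra_simps)
    finally show ?thesis .
  qed
  have fr: "f (complex_of_real r) = x + exp (-2 * t) *\<^sub>R (p - x)"
  proof -
    have "\<And>i. f (complex_of_real r) $ i = (x + exp (-2 * t) *\<^sub>R (p - x)) $ i"
    proof -
      fix i
      have "f (complex_of_real r) $ i = x$i + of_real (exp (-2 * s) - \<epsilon> * exp (-2 * s) * r) * (p$i - x$i)"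
        unfolding f_def by simp (simp add: scaleR_conv_of_real algebra_simps)
      also have "\<dots> = (x + exp (-2 * t) *\<^sub>R (p - x)) $ i"
        unfolding sc by simp (simp add: scaleR_conv_of_real)
      finally show "f (complex_of_real r) $ i = (x + exp (-2 * t) *\<^sub>R (p - x)) $ i" .
    qed
    thus ?thesis by (simp add: vec_eq_iff)
  qed
  have "lempert \<Omega> (f 0) (f (complex_of_real r)) \<le> poincare_dist 0 (complex_of_real r)"
    by (rule lempert_le[OF hf D0 Dr])
  also have "poincare_dist 0 (complex_of_real r) = artanh \<bar>r\<bar>"
    unfolding poincare_dist_def by simp
  also have "\<dots> \<le> \<bar>r\<bar> / (1 - \<bar>r\<bar>)" by (rule artanh_le_bound) (use r1 in simp_all)
  also have "\<dots> \<le> B / (1 - B)" by (rule frac_mono_lt1) (use rb B in simp_all)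
  finally show ?thesis unfolding f0 fr .
qed


lemma upper_bound:
  fixes \<Omega> :: "(complex^'n) set"
  assumes op: "open \<Omega>" and cv: "convex \<Omega>" and x: "x \<in> frontier \<Omega>" and ep: "\<epsilon> > 0"
    and del: "delta_dir \<Omega> p (x - p) \<ge> \<epsilon> * norm (x - p)" and pO: "p \<in> \<Omega>"
    and t1: "t1 \<ge> 0" and t2: "t2 \<ge> 0"
  shows "kobayashi_dist \<Omega> (x + exp (-2 * t1) *\<^sub>R (p - x)) (x + exp (-2 * t2) *\<^sub>R (p - x))
           \<le> 2 / \<epsilon> * \<bar>t1 - t2\<bar>"
proof -
  define xt where "xt = (\<lambda>s::real. x + exp (-2 * s) *\<^sub>R (p - x))"
  define K where "K = kobayashi_dist \<Omega> (xt t1) (xt t2)"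
  define T where "T = \<bar>t2 - t1\<bar>"
  define Bn where "Bn = (\<lambda>N::nat. (2 * T / real N) * exp (2 * T / real N) / \<epsilon>)"
  have xtO: "xt s \<in> \<Omega>" if "s \<ge> 0" for s
    using disc_in[OF op cv x ep del that _ pO, of 0] unfolding xt_def by simp
  have bound: "K \<le> real N * (Bn N / (1 - Bn N))" if N: "N > 0" and BN: "Bn N < 1" for N
  proof -
    define sk where "sk = (\<lambda>k::nat. t1 + real k * (t2 - t1) / real N)"
    define c where "c = (\<lambda>k. xt (sk k))"
    have sk0: "sk k \<ge> 0" if "k \<le> N" for k
    proof -
      define l where "l = real k / real N"
      have l: "0 \<le> l" "l \<le> 1" unfolding l_def using that N by auto
      have "sk k = (1 - l) * t1 + l * t2" unfolding sk_def l_def using N by (simp add: field_simps)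
      also have "\<dots> \<ge> 0" using l t1 t2 by simp
      finally show ?thesis .
    qed
    have c0: "c 0 = xt t1" unfolding c_def sk_def by simp
    have cN: "c N = xt t2" unfolding c_def sk_def using N by simp
    have cO: "\<forall>i\<le>N. c i \<in> \<Omega>" unfolding c_def using sk0 xtO by auto
    have "K \<le> (\<Sum>i<N. lempert \<Omega> (c i) (c (Suc i)))"
      unfolding K_def by (rule kob_le[OF op cv c0 cN cO])
    also have "\<dots> \<le> (\<Sum>i<N. Bn N / (1 - Bn N))"
    proof (rule sum_mono)
      fix i assume i: "i \<in> {..<N}"
      have "sk (Suc i) - sk i = (t2 - t1) / real N"
        unfolding sk_def using N by (simp add: field_simps)
      hence d: "\<bar>sk (Suc i) - sk i\<bar> = T / real N"
        unfolding T_def by (simp add: abs_divide)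
      have "exp (2 * (T / real N)) - 1 \<le> 2 * (T / real N) * exp (2 * (T / real N))"
        by (rule exp_minus_one_bound) (simp add: T_def)
      hence "(exp (2 * (T / real N)) - 1) / \<epsilon> \<le> 2 * (T / real N) * exp (2 * (T / real N)) / \<epsilon>"
        by (rule divide_right_mono) (use ep in simp)
      moreover have "Bn N = 2 * (T / real N) * exp (2 * (T / real N)) / \<epsilon>"
        unfolding Bn_def by simp
      ultimately have "(exp (2 * \<bar>sk (Suc i) - sk i\<bar>) - 1) / \<epsilon> \<le> Bn N"
        unfolding d by simp
      moreover have a: "sk i \<ge> 0" "sk (Suc i) \<ge> 0" using i sk0 by auto
      ultimately show "lempert \<Omega> (c i) (c (Suc i)) \<le> Bn N / (1 - Bn N)"
        unfolding c_def xt_def using step_bound[OF op cv x ep del pO a(1) a(2) _ BN] by blast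
    qed
    also have "\<dots> = real N * (Bn N / (1 - Bn N))" by simp
    finally show ?thesis .
  qed
  have lim1: "(\<lambda>N. 2 * T / real N) \<longlonglongrightarrow> 0"
    using lim_const_over_n[of "2 * T"] by simp
  have lim2: "(\<lambda>N. exp (2 * T / real N)) \<longlonglongrightarrow> 1"
    using tendsto_exp[OF lim1] by simp
  have limB: "Bn \<longlonglongrightarrow> 0"
    unfolding Bn_def using tendsto_divide[OF tendsto_mult[OF lim1 lim2] tendsto_const[of \<epsilon>]] ep by simp
  have limG': "(\<lambda>N. (2 * T / \<epsilon>) * exp (2 * T / real N) / (1 - Bn N)) \<longlonglongrightarrow> 2 * T / \<epsilon>"
    using tendsto_divide[OF tendsto_mult[OF tendsto_const[of "2 * T / \<epsilon>"] lim2] tendsto_diff[OF tendsto_const[of 1] limB]]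
    by simp
  have evq: "eventually (\<lambda>N. (2 * T / \<epsilon>) * exp (2 * T / real N) / (1 - Bn N) = real N * (Bn N / (1 - Bn N))) sequentially"
    using eventually_gt_at_top[of 0]
    by eventually_elim (simp add: Bn_def field_simps)
  have limG: "(\<lambda>N. real N * (Bn N / (1 - Bn N))) \<longlonglongrightarrow> 2 * T / \<epsilon>"
    using Lim_transform_eventually[OF limG' evq] .
  have ev: "eventually (\<lambda>N. K \<le> real N * (Bn N / (1 - Bn N))) sequentially"
    using eventually_conj[OF eventually_gt_at_top[of 0] order_tendstoD(2)[OF limB zero_less_one]]
    by eventually_elim (use bound in auto)
  have "K \<le> 2 * T / \<epsilon>"
    by (rule tendsto_lowerbound[OF limG ev]) simp
  thus ?thesis unfolding K_def xt_def T_def by (simp add: abs_minus_commute)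
qed


theorem lemma3p2:
  fixes \<Omega> :: "(complex^'n) set" and p x :: "complex^'n" and \<epsilon> :: real
  assumes "open \<Omega>" and "convex \<Omega>" and "p \<in> \<Omega>" and "x \<in> frontier \<Omega>"
    and "\<epsilon> > 0" and "delta_dir \<Omega> p (x - p) \<ge> \<epsilon> * norm (x - p)"
  shows "(\<forall>t1 t2. t1 \<ge> 0 \<longrightarrow> t2 \<ge> 0 \<longrightarrow>
            \<bar>t1 - t2\<bar> \<le> kobayashi_dist \<Omega> (x + exp (-2*t1) *\<^sub>R (p - x)) (x + exp (-2*t2) *\<^sub>R (p - x)) \<and>
            kobayashi_dist \<Omega> (x + exp (-2*t1) *\<^sub>R (p - x)) (x + exp (-2*t2) *\<^sub>R (p - x))
              \<le> 2 / \<epsilon> * \<bar>t1 - t2\<bar>)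
       \<and> (\<lambda>t. x + exp (-2*t) *\<^sub>R (p - x)) ` {0..} = {p + s *\<^sub>R (x - p) | s. 0 \<le> s \<and> s < 1}
       \<and> quasi_geodesic (kobayashi_dist \<Omega>) (2 / \<epsilon>) 0 {0..} (\<lambda>t. x + exp (-2*t) *\<^sub>R (p - x))"
proof -
  note op = assms(1) and cv = assms(2) and pO = assms(3) and x = assms(4) and ep = assms(5)
    and del = assms(6)
  define xt where "xt = (\<lambda>t::real. x + exp (-2*t) *\<^sub>R (p - x))"
  have xO: "x \<notin> \<Omega>" using x op by (simp add: frontier_def interior_open)
  have xp: "x \<noteq> p" using xO pO by auto
  have xtO: "xt s \<in> \<Omega>" if "s \<ge> 0" for s
    using disc_in[OF op cv x ep del that _ pO, of 0] unfolding xt_def by simp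
  obtain a where pos: "\<forall>y\<in>\<Omega>. 0 < Re (ufun a x y)" using separation[OF op cv xO] by blast
  have ufun_xt: "ufun a x (xt t) = of_real (exp (-2*t)) * ufun a x p" for t
    unfolding ufun_def xt_def sum_distrib_left
    by (rule sum.cong) (simp, simp, simp add: scaleR_conv_of_real algebra_simps)
  have up: "cmod (ufun a x p) > 0"
    using pos pO complex_Re_le_cmod[of "ufun a x p"] by force
  have lnxt: "ln (cmod (ufun a x (xt t))) = -2*t + ln (cmod (ufun a x p))" for t
    unfolding ufun_xt norm_mult using up by (simp add: ln_mult)
  have lower: "\<bar>t1 - t2\<bar> \<le> kobayashi_dist \<Omega> (xt t1) (xt t2)" if "t1 \<ge> 0" "t2 \<ge> 0" for t1 t2
  proof -
    have "\<bar>t1 - t2\<bar> = \<bar>ln (cmod (ufun a x (xt t1))) - ln (cmod (ufun a x (xt t2)))\<bar> / 2"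
      unfolding lnxt by (simp add: abs_minus_commute abs_if)
    also have "\<dots> \<le> kobayashi_dist \<Omega> (xt t1) (xt t2)"
      by (rule kob_lip[OF op cv xtO xtO pos]) (use that in auto)
    finally show ?thesis .
  qed
  have upper: "kobayashi_dist \<Omega> (xt t1) (xt t2) \<le> 2 / \<epsilon> * \<bar>t1 - t2\<bar>" if "t1 \<ge> 0" "t2 \<ge> 0" for t1 t2
    unfolding xt_def using upper_bound[OF op cv x ep del pO that] by simp
  have e1: "\<epsilon> \<le> 1"
  proof -
    have "p + 1 *s (x - p) = x" by (simp add: vec_eq_iff)
    hence "delta_dir \<Omega> p (x - p) \<le> norm (1 *s (x - p))" using delta_le[of p 1 "x - p" \<Omega>] xO by simp
    hence "\<epsilon> * norm (x - p) \<le> 1 * norm (x - p)" using del by (simp add: norm_smult_vec)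
    moreover have "norm (x - p) > 0" using xp by simp
    ultimately show ?thesis by (simp add: mult_le_cancel_right)
  qed
  have img: "xt ` {0..} = {p + s *\<^sub>R (x - p) | s. 0 \<le> s \<and> s < 1}"
  proof
    show "xt ` {0..} \<subseteq> {p + s *\<^sub>R (x - p) | s. 0 \<le> s \<and> s < 1}"
    proof
      fix y assume "y \<in> xt ` {0..}"
      then obtain t where t: "t \<ge> 0" "y = xt t" by auto
      have "y = p + (1 - exp (-2*t)) *\<^sub>R (x - p)" unfolding t xt_def by (simp add: algebra_simps)
      moreover have "0 \<le> 1 - exp (-2*t)" "1 - exp (-2*t) < 1" using t by auto
      ultimately show "y \<in> {p + s *\<^sub>R (x - p) | s. 0 \<le> s \<and> s < 1}" by blast
    qed
    show "{p + s *\<^sub>R (x - p) | s. 0 \<le> s \<and> s < 1} \<subseteq> xt ` {0..}"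
    proof
      fix y assume "y \<in> {p + s *\<^sub>R (x - p) | s. 0 \<le> s \<and> s < 1}"
      then obtain s where s: "0 \<le> s" "s < 1" "y = p + s *\<^sub>R (x - p)" by auto
      define t where "t = - ln (1 - s) / 2"
      have t0: "t \<ge> 0" unfolding t_def using s by simp
      have ee: "exp (-2*t) = 1 - s" unfolding t_def using s by simp
      have "xt t = x + (1 - s) *\<^sub>R (p - x)" unfolding xt_def ee ..
      also have "\<dots> = y" unfolding s(3) by (simp add: algebra_simps)
      finally have "xt t = y" .
      thus "y \<in> xt ` {0..}" using t0 by auto
    qed
  qed
  have qg: "quasi_geodesic (kobayashi_dist \<Omega>) (2 / \<epsilon>) 0 {0..} xt"
    unfolding quasi_geodesic_def
  proof (intro ballI conjI)
    fix t1 t2 :: real assume "t1 \<in> {0..}" "t2 \<in> {0..}"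
    hence t: "t1 \<ge> 0" "t2 \<ge> 0" by auto
    have "\<bar>t1 - t2\<bar> / (2 / \<epsilon>) = \<bar>t1 - t2\<bar> * (\<epsilon> / 2)" by simp
    also have "\<dots> \<le> \<bar>t1 - t2\<bar> * 1" by (rule mult_left_mono) (use e1 in auto)
    finally show "\<bar>t1 - t2\<bar> / (2 / \<epsilon>) - 0 \<le> kobayashi_dist \<Omega> (xt t1) (xt t2)"
      using lower[OF t] by simp
    show "kobayashi_dist \<Omega> (xt t1) (xt t2) \<le> 2 / \<epsilon> * \<bar>t1 - t2\<bar> + 0"
      using upper[OF t] by simp
  qed
  show ?thesis
    using lower upper img qg unfolding xt_def by blast
qed

end
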